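(* Let $m\ge 2$, let $f:\mathbb{R}^n\to\mathbb{R}$ be convex, let $\mathbf{x}_0\in\mathbb{R}^n$ not be a minimizer of $f$, let $\lambda\ge 0$, let $\mathbf{z}\in\mathbb{R}^m$ be nonzero and set $\bar{\mathbf{z}}=\sqrt m\,\mathbf{z}$. Write $\delta=\delta(\lambda\partial f(\mathbf{x}_0))$, let $\gamma_m=\sqrt2\,\Gamma(\tfrac{m+1}{2})/\Gamma(\tfrac m2)$ (the expected Euclidean norm of a standard Gaussian vector in $\mathbb{R}^m$), and fix $0<t<\sqrt{m-1}-\sqrt{\delta}$. Define $$\ell(t)=2\|\mathbf{z}\|_2\,\frac{\sqrt{\delta}+t}{\sqrt{m-1}-\sqrt{\delta}-t}.$$ Suppose $\mathbf{g}\in\mathbb{R}^m$ and $\mathbf{h}\in\mathbb{R}^n$ satisfy: (1) $\|\mathbf{g}\|_2\ge\gamma_m-t/4$; (2) $\mathrm{dist}(\mathbf{h},\lambda\partial f(\mathbf{x}_0))\le\sqrt{\delta}+t/4$; (3) $\mathbf{g}^T\bar{\mathbf{z}}\le (t/4)\|\bar{\mathbf{z}}\|_2$. Then $$\mathcal{L}(t;\mathbf{g},\mathbf{h}):=\inf_{\alpha\ge\ell(t)}\Big\{\sqrt{\alpha^2\|\mathbf{g}\|_2^2+\|\bar{\mathbf{z}}\|_2^2-2\alpha\,\mathbf{g}^T\bar{\mathbf{z}}}-\alpha\,\mathrm{dist}(\mathbf{h},\lambda\partial f(\mathbf{x}_0))\Big\}>\|\bar{\mathbf{z}}\|_2.$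$
   Context: For a convex $f:\mathbb{R}^n\to\mathbb{R}$, the subdifferential at $\mathbf{x}_0$ is $\partial f(\mathbf{x}_0)=\{\mathbf{s}\in\mathbb{R}^n: f(\mathbf{x}_0+\mathbf{w})\ge f(\mathbf{x}_0)+\mathbf{s}^T\mathbf{w}\ \forall \mathbf{w}\in\mathbb{R}^n\}$, and for $\lambda\ge0$, $\lambda\partial f(\mathbf{x}_0)=\{\lambda\mathbf{s}:\mathbf{s}\in\partial f(\mathbf{x}_0)\}$ (a nonempty, convex, compact set). For a nonempty closed convex set $\mathcal{C}\subset\mathbb{R}^n$, $\mathrm{dist}(\mathbf{v},\mathcal{C})=\min_{\mathbf{s}\in\mathcal{C}}\|\mathbf{v}-\mathbf{s}\|_2$, and the Gaussian squared distance is $\delta(\mathcal{C})=\mathbb{E}_{\mathbf{h}}[\mathrm{dist}^2(\mathbf{h},\mathcal{C})]$, where $\mathbf{h}\in\mathbb{R}^n$ has i.i.d. $\mathcal{N}(0,1)$ entries. *)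

theory Defs
  imports "HOL-Analysis.Analysis"
begin

definition subdiff :: "('a::real_inner \<Rightarrow> real) \<Rightarrow> 'a \<Rightarrow> 'a set" where
  "subdiff f x0 = {s. \<forall>w. f (x0 + w) \<ge> f x0 + s \<bullet> w}"

definition scaled_subdiff :: "real \<Rightarrow> ('a::real_inner \<Rightarrow> real) \<Rightarrow> 'a \<Rightarrow> 'a set" where
  "scaled_subdiff lam f x0 = (\<lambda>s. lam *\<^sub>R s) ` subdiff f x0"

definition gauss_density :: "'a::euclidean_space \<Rightarrow> real" where
  "gauss_density h = (2 * pi) powr (- real DIM('a) / 2) * exp (- (norm h)\<^sup>2 / 2)"

definition gauss_sq_dist :: "'a::euclidean_space set \<Rightarrow> real" where
  "gauss_sq_dist C = (\<integral>h. (infdist h C)\<^sup>2 * gauss_density h \<partial>lborel)"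

definition gamma_m :: "nat \<Rightarrow> real" where
  "gamma_m m = sqrt 2 * Gamma ((real m + 1) / 2) / Gamma (real m / 2)"

end

theory Submission
  imports Defs
begin


lemma Gamma_p1: "(x::real) > 0 \<Longrightarrow> Gamma (x + 1) = x * Gamma x"
  by (rule Gamma_plus1) (auto simp: nonpos_Ints_def)

lemma frac_le_cross: fixes a b c d :: real
  shows "b > 0 \<Longrightarrow> d > 0 \<Longrightarrow> a * d \<le> c * b \<Longrightarrow> a / b \<le> c / d"
  by (simp add: divide_simps)

lemma wendel_low:
  fixes y :: real assumes y: "y > 0"
  shows "y\<^sup>2 * (Gamma y)\<^sup>2 \<le> (y + 1/2) * (Gamma (y + 1/2))\<^sup>2"
proof -
  have "(ln \<circ> Gamma) ((1 - 1/2) *\<^sub>R (y+1/2) + (1/2) *\<^sub>R (y + 3/2))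
        \<le> (1 - 1/2) * (ln \<circ> Gamma) (y+1/2) + (1/2) * (ln \<circ> Gamma) (y + 3/2)"
    by (rule convex_onD[OF log_convex_Gamma_real]) (use y in auto)
  moreover have "(1 - 1/2) *\<^sub>R (y+1/2) + (1/2) *\<^sub>R (y + 3/2) = y + 1" by (simp add: algebra_simps)
  ultimately have "2 * ln (Gamma (y+1)) \<le> ln (Gamma (y+1/2)) + ln (Gamma (y+3/2))"
    by (simp add: algebra_simps)
  hence "exp (2 * ln (Gamma (y+1))) \<le> exp (ln (Gamma (y+1/2)) + ln (Gamma (y+3/2)))"
    by simp
  moreover have "exp (2 * ln (Gamma (y+1))) = (Gamma (y+1))\<^sup>2"
  proof -
    have "2 * ln (Gamma (y+1)) = ln ((Gamma (y+1))^2)" using y by (simp add: ln_realpow)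
    moreover have "Gamma (y+1) > 0" using y by (intro Gamma_real_pos) simp
    ultimately show ?thesis by simp
  qed
  moreover have "exp (ln (Gamma (y+1/2)) + ln (Gamma (y+3/2))) = Gamma (y+1/2) * Gamma (y+3/2)"
    using y by (simp add: exp_add)
  ultimately have "(Gamma (y+1))\<^sup>2 \<le> Gamma (y+1/2) * Gamma (y+3/2)" by simp
  moreover have "Gamma (y+1) = y * Gamma y" using Gamma_p1 y by simp
  moreover have "Gamma (y+3/2) = (y+1/2) * Gamma (y+1/2)"
    using Gamma_p1[of "y+1/2"] y by (simp add: algebra_simps)
  ultimately show ?thesis by (simp add: power2_eq_square power_mult_distrib algebra_simps)
qed

definition hR :: "real \<Rightarrow> real" where
  "hR x = (Gamma (x + 1/2) / Gamma x)\<^sup>2 / (x - 1/4)"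

lemma hR_step:
  assumes x: "x \<ge> 1" shows "hR (x+1) \<le> hR x"
proof -
  have g1: "Gamma (x+1) = x * Gamma x" using Gamma_p1 x by simp
  have g2: "Gamma (x+1+1/2) = (x+1/2) * Gamma (x+1/2)"
    using Gamma_p1[of "x+1/2"] x by (simp add: algebra_simps)
  have pos: "Gamma x > 0" "Gamma (x+1/2) > 0" using x by auto
  define A where "A = (Gamma (x + 1/2) / Gamma x)\<^sup>2"
  have A0: "A \<ge> 0" by (simp add: A_def)
  have "Gamma (x + 1 + 1/2) / Gamma (x+1) = ((x+1/2)/x) * (Gamma (x + 1/2) / Gamma x)"
    using g1 g2 x by simp
  hence "hR (x+1) = ((x+1/2)/x * (Gamma (x + 1/2) / Gamma x))\<^sup>2 / (x + 1 - 1/4)"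
    unfolding hR_def by (simp only:)
  hence "hR (x+1) = ((x+1/2)/x)\<^sup>2 * A / (x + 3/4)"
    unfolding A_def by (simp only: power_mult_distrib) simp
  also have "\<dots> \<le> A / (x - 1/4)"
  proof -
    have "(x+1/2)\<^sup>2 / (x\<^sup>2 * (x + 3/4)) \<le> 1 / (x - 1/4)"
    proof (rule frac_le_cross)
      show "0 < x\<^sup>2 * (x + 3/4)" using x by (intro mult_pos_pos) auto
      show "0 < x - 1/4" using x by simp
      show "(x + 1/2)\<^sup>2 * (x - 1/4) \<le> 1 * (x\<^sup>2 * (x + 3/4))"
        by (simp add: power2_eq_square algebra_simps)
    qed
    hence q: "((x+1/2)/x)\<^sup>2 / (x + 3/4) \<le> 1 / (x - 1/4)" by (simp add: power_divide)
    show ?thesis using A0 mult_left_mono[OF q A0] by (simp add: field_simps)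
  qed
  finally show ?thesis unfolding hR_def A_def by simp
qed

lemma hR_ge1: assumes x: "x \<ge> 1" shows "hR x \<ge> 1"
proof (rule ccontr)
  assume "\<not> hR x \<ge> 1" hence h1: "hR x < 1" by simp
  have mono: "hR (x + real k) \<le> hR x" for k
  proof (induction k)
    case (Suc k) thus ?case using hR_step[of "x + real k"] x by (simp add: algebra_simps)
  qed simp
  have low: "hR y \<ge> y\<^sup>2 / ((y+1/2) * (y - 1/4))" if y: "y \<ge> 1" for y
  proof -
    have wl: "y\<^sup>2 * (Gamma y)\<^sup>2 \<le> (y + 1/2) * (Gamma (y + 1/2))\<^sup>2" by (rule wendel_low) (use y in simp)
    have gp: "Gamma y > 0" using y by (intro Gamma_real_pos) simp
    have "y\<^sup>2 / (y + 1/2) \<le> (Gamma (y + 1/2))\<^sup>2 / (Gamma y)\<^sup>2"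
    proof (rule frac_le_cross)
      show "0 < (Gamma y)\<^sup>2" using gp by simp
      show "0 < y + 1/2" using y by simp
      show "y\<^sup>2 * (Gamma y)\<^sup>2 \<le> (Gamma (y + 1 / 2))\<^sup>2 * (y + 1 / 2)" using wl by (simp add: algebra_simps)
    qed
    hence "y\<^sup>2 / (y + 1/2) \<le> (Gamma (y + 1/2) / Gamma y)\<^sup>2" by (simp add: power_divide)
    hence "y\<^sup>2 / (y + 1/2) / (y - 1/4) \<le> (Gamma (y + 1/2) / Gamma y)\<^sup>2 / (y - 1/4)"
      using y by (intro divide_right_mono) auto
    thus ?thesis unfolding hR_def by (simp add: field_simps)
  qed
  define e where "e = 1 - hR x"
  have e: "e > 0" using h1 by (simp add: e_def)
  obtain k :: nat where k: "real k > 1 / e" using reals_Archimedean2 by blast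
  define y where "y = x + real k"
  have y1: "y \<ge> 1" "y > 1/e" using x k e by (auto simp: y_def)
  have "y\<^sup>2 / ((y+1/2) * (y - 1/4)) \<le> 1 - e" using low[OF y1(1)] mono[of k] by (simp add: y_def e_def)
  moreover have Dp: "(y+1/2) * (y - 1/4) > 0" using y1 by (intro mult_pos_pos) auto
  ultimately have "y\<^sup>2 \<le> (1 - e) * ((y+1/2) * (y - 1/4))" by (simp add: pos_divide_le_eq)
  hence "e * y\<^sup>2 \<le> y/4 - 1/8 - e * (y/4 - 1/8)"
  proof -
    assume a: "y\<^sup>2 \<le> (1 - e) * ((y+1/2) * (y - 1/4))"
    have "(1 - e) * ((y+1/2) * (y - 1/4)) = y^2 - e*y^2 + (y/4 - 1/8 - e * (y/4 - 1/8))"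
      by (simp add: power2_eq_square field_simps)
    with a show ?thesis by linarith
  qed
  moreover have "e * (y/4 - 1/8) \<ge> 0" using e y1 by simp
  moreover have "e * y > 1" using y1 e by (simp add: field_simps)
  moreover have "(e * y) * y > 1 * y" using y1 e \<open>e * y > 1\<close> by (intro mult_strict_right_mono) auto
  ultimately have "y < y/4" by (simp add: power2_eq_square mult.assoc)
  thus False using y1 by simp
qed



lemma core:
  fixes r a g0 s t w G D p :: real
  assumes r2: "r\<^sup>2 \<ge> 2" and r0: "r \<ge> 0" and a0: "a \<ge> 0" and g00: "g0 \<ge> 0"
    and a2: "a\<^sup>2 = r\<^sup>2 - 1" and g2: "g0\<^sup>2 = r\<^sup>2 - 1/2"
    and s0: "s \<ge> 0" and t0: "t > 0" and ta: "t < a - s" and w0: "w > 0"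
    and G: "G \<ge> g0 - t/4" and D0: "D \<ge> 0" and D1: "D \<le> s + t/4"
    and p: "p \<le> t / 4 * (r * w)"
  shows "2 * w * (s + t) / (a - s - t) * (G\<^sup>2 - D\<^sup>2) > 2 * p + 2 * (r * w) * D"
    and "G > D"
proof -
  define K where "K = a - s - t"
  have K0: "K > 0" using ta by (simp add: K_def)
  have ga: "g0 > a"
  proof -
    have "a\<^sup>2 < g0\<^sup>2" using a2 g2 by simp
    thus ?thesis using a0 g00 by (meson power_less_imp_less_base)
  qed
  have gr: "g0 \<le> r"
  proof -
    have "g0\<^sup>2 \<le> r\<^sup>2" using g2 by simp
    thus ?thesis using r0 g00 by (meson power2_le_imp_le)
  qed
  have ar: "a \<le> r" using ga gr by simp
  have rag: "r * a \<le> g0\<^sup>2"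
  proof -
    have e1: "(r * a)\<^sup>2 = r\<^sup>2 * (r\<^sup>2 - 1)" by (simp add: power_mult_distrib a2)
    have e2: "(g0\<^sup>2)\<^sup>2 = (r\<^sup>2 - 1/2)\<^sup>2" using g2 by simp
    have "r\<^sup>2 * (r\<^sup>2 - 1) \<le> (r\<^sup>2 - 1/2)\<^sup>2" by (simp add: power2_eq_square field_simps)
    hence "(r * a)\<^sup>2 \<le> (g0\<^sup>2)\<^sup>2" using e1 e2 by simp
    thus ?thesis using r0 a0 by (meson power2_le_imp_le zero_le_power2)
  qed
  define c where "c = g0 - t/4"
  define d where "d = s + t/4"
  have cd: "c > d" using ga ta t0 by (simp add: c_def d_def)
  have d0: "d \<ge> 0" using s0 t0 by (simp add: d_def)
  have Gc: "G \<ge> c" using G by (simp add: c_def)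
  show "G > D" using Gc cd D1 by (simp add: d_def)
  have GD: "G\<^sup>2 - D\<^sup>2 \<ge> c\<^sup>2 - d\<^sup>2"
  proof -
    have "c\<^sup>2 \<le> G\<^sup>2" using Gc cd d0 by (intro power_mono) auto
    moreover have "D\<^sup>2 \<le> d\<^sup>2" using D0 D1 by (intro power_mono) (auto simp: d_def)
    ultimately show ?thesis by simp
  qed
  have cd2: "c\<^sup>2 - d\<^sup>2 = g0\<^sup>2 - g0 * t / 2 - s\<^sup>2 - s * t / 2"
    by (simp add: c_def d_def power2_eq_square field_simps)
  have st: "s + t > 0" using s0 t0 by simp
  have key: "2 * (s + t) * (c\<^sup>2 - d\<^sup>2) > r * (2 * s + t) * K"
  proof -
    have "2 * (s + t) * (c\<^sup>2 - d\<^sup>2) \<ge> 2 * (s + t) * (r * a - g0 * t / 2 - s\<^sup>2 - s * t / 2)"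
      unfolding cd2 using st rag by (intro mult_left_mono) auto
    moreover have "2 * (s + t) * (r * a - g0 * t / 2 - s\<^sup>2 - s * t / 2) - r * (2 * s + t) * K
        = r * a * t + (s + t) * (s * (2 * r - 2 * s - t) + t * (r - g0))"
      by (simp add: K_def power2_eq_square field_simps)
    moreover have "r * a * t > 0"
      using ga ar ta s0 t0 by (intro mult_pos_pos) auto
    moreover have "(s + t) * (s * (2 * r - 2 * s - t) + t * (r - g0)) \<ge> 0"
      using st s0 t0 gr ar ta by (intro mult_nonneg_nonneg add_nonneg_nonneg) auto
    ultimately show ?thesis by linarith
  qed
  have l1: "2 * w * (s + t) / K * (G\<^sup>2 - D\<^sup>2) \<ge> 2 * w * (s + t) / K * (c\<^sup>2 - d\<^sup>2)"
    using GD w0 st K0 by (intro mult_left_mono) auto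
  have l2: "2 * w * (s + t) / K * (c\<^sup>2 - d\<^sup>2) > r * w * (2 * s + t)"
  proof -
    have "2 * w * (s + t) / K * (c\<^sup>2 - d\<^sup>2) = w * (2 * (s + t) * (c\<^sup>2 - d\<^sup>2)) / K" by simp
    moreover have "w * (2 * (s + t) * (c\<^sup>2 - d\<^sup>2)) > w * (r * (2 * s + t) * K)"
      using key w0 by simp
    ultimately show ?thesis using K0 by (simp add: field_simps)
  qed
  have l3: "2 * p + 2 * (r * w) * D \<le> r * w * (2 * s + t)"
  proof -
    have "2 * (r * w) * D \<le> 2 * (r * w) * (s + t/4)" using D1 r0 w0 by (intro mult_left_mono) auto
    thus ?thesis using p by (simp add: algebra_simps)
  qed
  show "2 * w * (s + t) / (a - s - t) * (G\<^sup>2 - D\<^sup>2) > 2 * p + 2 * (r * w) * D"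
    using l1 l2 l3 by (simp add: K_def)
qed



lemma inf_part:
  fixes l G D Z p :: real
  assumes l0: "l > 0" and GD: "G > D" and D0: "D \<ge> 0" and Z0: "Z \<ge> 0"
    and E0: "l * (G\<^sup>2 - D\<^sup>2) > 2 * p + 2 * Z * D"
  shows "(INF \<alpha>\<in>{l..}. ereal (sqrt (\<alpha>\<^sup>2 * G\<^sup>2 + Z\<^sup>2 - 2 * \<alpha> * p) - \<alpha> * D)) > ereal Z"
proof -
  define e where "e = l * (G\<^sup>2 - D\<^sup>2) - 2 * p - 2 * Z * D"
  have e0: "e > 0" using E0 by (simp add: e_def)
  define c where "c = min 1 (min (e / (4 * D + 4)) (l * e / (4 * Z + 2)))"
  have c0: "c > 0" using e0 l0 D0 Z0 by (simp add: c_def)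
  have c1: "c \<le> 1" and c2: "c \<le> e / (4 * D + 4)" and c3: "c \<le> l * e / (4 * Z + 2)"
    by (simp_all add: c_def)
  have GD2: "G\<^sup>2 - D\<^sup>2 > 0"
  proof -
    have "D\<^sup>2 < G\<^sup>2" using GD D0 by (intro power_strict_mono) auto
    thus ?thesis by simp
  qed
  have bound: "sqrt (\<alpha>\<^sup>2 * G\<^sup>2 + Z\<^sup>2 - 2 * \<alpha> * p) - \<alpha> * D \<ge> Z + c" if a: "\<alpha> \<ge> l" for \<alpha>
  proof -
    have a0: "\<alpha> > 0" using a l0 by simp
    define E where "E = \<alpha> * (G\<^sup>2 - D\<^sup>2) - 2 * p - 2 * Z * D"
    have EE: "E \<ge> e"
    proof -
      have "\<alpha> * (G\<^sup>2 - D\<^sup>2) \<ge> l * (G\<^sup>2 - D\<^sup>2)" using a GD2 by (intro mult_right_mono) auto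
      thus ?thesis by (simp add: E_def e_def)
    qed
    have X: "\<alpha>\<^sup>2 * G\<^sup>2 + Z\<^sup>2 - 2 * \<alpha> * p = (Z + \<alpha> * D)\<^sup>2 + \<alpha> * E"
      by (simp add: E_def power2_eq_square algebra_simps)
    have h1: "2 * c * \<alpha> * D \<le> \<alpha> * e / 2"
    proof -
      have "c * (4 * D + 4) \<le> e" using c2 D0 by (simp add: pos_le_divide_eq)
      hence "2 * c * D \<le> e / 2" using c0 by (simp add: algebra_simps)
      hence "\<alpha> * (2 * c * D) \<le> \<alpha> * (e / 2)" using a0 by (intro mult_left_mono) auto
      thus ?thesis by (simp add: algebra_simps)
    qed
    have h2: "2 * c * Z + c\<^sup>2 \<le> \<alpha> * e / 2"
    proof -
      have "c\<^sup>2 \<le> c" using c0 c1 by (simp add: power2_eq_square mult_left_le)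
      moreover have "c * (4 * Z + 2) \<le> l * e" using c3 Z0 by (simp add: pos_le_divide_eq)
      moreover have "l * e \<le> \<alpha> * e" using a e0 by (intro mult_right_mono) auto
      ultimately show ?thesis by (simp add: algebra_simps)
    qed
    have "\<alpha> * E \<ge> \<alpha> * e" using EE a0 by (intro mult_left_mono) auto
    hence "\<alpha>\<^sup>2 * G\<^sup>2 + Z\<^sup>2 - 2 * \<alpha> * p \<ge> (Z + \<alpha> * D + c)\<^sup>2"
      unfolding X using h1 h2 by (simp add: power2_eq_square algebra_simps)
    hence "sqrt (\<alpha>\<^sup>2 * G\<^sup>2 + Z\<^sup>2 - 2 * \<alpha> * p) \<ge> sqrt ((Z + \<alpha> * D + c)\<^sup>2)"
      by (rule real_sqrt_le_mono)
    moreover have "Z + \<alpha> * D + c \<ge> 0" using Z0 a0 D0 c0 by simp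
    ultimately show ?thesis by simp
  qed
  have "ereal (Z + c) \<le> (INF \<alpha>\<in>{l..}. ereal (sqrt (\<alpha>\<^sup>2 * G\<^sup>2 + Z\<^sup>2 - 2 * \<alpha> * p) - \<alpha> * D))"
    using bound by (intro INF_greatest) auto
  moreover have "ereal Z < ereal (Z + c)" using c0 by simp
  ultimately show ?thesis using less_le_trans by blast
qed



lemma gamma_m_ge: assumes m: "m \<ge> 2" shows "gamma_m m \<ge> sqrt (real m - 1/2)"
proof -
  define x where "x = real m / 2"
  have x1: "x \<ge> 1" using m by (simp add: x_def)
  have "hR x \<ge> 1" using hR_ge1 x1 by simp
  hence R: "(Gamma (x + 1/2) / Gamma x)\<^sup>2 \<ge> x - 1/4"
    using x1 unfolding hR_def by (simp add: le_divide_eq)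
  have eq: "gamma_m m = sqrt 2 * (Gamma (x + 1/2) / Gamma x)"
    unfolding gamma_m_def x_def by (simp add: add_divide_distrib)
  have pos: "Gamma (x + 1/2) / Gamma x > 0" using x1 by simp
  have "(gamma_m m)\<^sup>2 = (sqrt 2)\<^sup>2 * (Gamma (x + 1/2) / Gamma x)\<^sup>2"
    unfolding eq by (rule power_mult_distrib)
  also have "\<dots> = 2 * (Gamma (x + 1/2) / Gamma x)\<^sup>2" by simp
  finally have "real m - 1/2 \<le> (gamma_m m)\<^sup>2" using R by (simp add: x_def)
  hence "sqrt (real m - 1/2) \<le> sqrt ((gamma_m m)\<^sup>2)" by (rule real_sqrt_le_mono)
  moreover have "gamma_m m \<ge> 0" unfolding eq by (rule mult_nonneg_nonneg) (use pos in auto)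
  ultimately show ?thesis by simp
qed


theorem lemma4:
  fixes f :: "real ^ 'n \<Rightarrow> real" and x0 h :: "real ^ 'n"
    and z g :: "real ^ 'm" and lam t :: real
  assumes m2: "CARD('m) \<ge> 2"
    and cvx: "convex_on UNIV f"
    and notmin: "\<exists>x. f x < f x0"
    and lam: "lam \<ge> 0"
    and z: "z \<noteq> 0"
    and t: "0 < t" "t < sqrt (real CARD('m) - 1) - sqrt (gauss_sq_dist (scaled_subdiff lam f x0))"
    and g1: "norm g \<ge> gamma_m CARD('m) - t / 4"
    and h2: "infdist h (scaled_subdiff lam f x0) \<le> sqrt (gauss_sq_dist (scaled_subdiff lam f x0)) + t / 4"
    and g3: "g \<bullet> (sqrt (real CARD('m)) *\<^sub>R z) \<le> (t / 4) * norm (sqrt (real CARD('m)) *\<^sub>R z)"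
  shows "(let zb = sqrt (real CARD('m)) *\<^sub>R z;
              dl = gauss_sq_dist (scaled_subdiff lam f x0);
              ell = 2 * norm z * (sqrt dl + t) / (sqrt (real CARD('m) - 1) - sqrt dl - t)
          in (INF \<alpha>\<in>{ell..}. ereal (sqrt (\<alpha>\<^sup>2 * (norm g)\<^sup>2 + (norm zb)\<^sup>2 - 2 * \<alpha> * (g \<bullet> zb))
                     - \<alpha> * infdist h (scaled_subdiff lam f x0))) > ereal (norm zb))"
  proof -
  define M where "M = real CARD('m)"
  define C where "C = scaled_subdiff lam f x0"
  define dl where "dl = gauss_sq_dist C"
  define s where "s = sqrt dl"
  define D where "D = infdist h C"
  define zb where "zb = sqrt M *\<^sub>R z"
  define r where "r = sqrt M"
  define a where "a = sqrt (M - 1)"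
  define g0 where "g0 = sqrt (M - 1/2)"
  have M2: "M \<ge> 2" using m2 by (simp add: M_def)
  have dl0: "dl \<ge> 0"
    unfolding dl_def gauss_sq_dist_def gauss_density_def
    by (rule integral_nonneg_AE, rule AE_I2) simp
  have s0: "s \<ge> 0" using dl0 by (simp add: s_def)
  have D0: "D \<ge> 0" by (simp add: D_def infdist_nonneg)
  have gam: "gamma_m CARD('m) \<ge> g0" using gamma_m_ge[OF m2] by (simp add: g0_def M_def)
  have nzb: "norm zb = r * norm z" using M2 by (simp add: zb_def r_def)
  have w0: "norm z > 0" using z by simp
  have core1: "2 * norm z * (s + t) / (a - s - t) * ((norm g)\<^sup>2 - D\<^sup>2) > 2 * (g \<bullet> zb) + 2 * (r * norm z) * D"
   and core2: "norm g > D"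
  proof -
    have args: "r\<^sup>2 \<ge> 2" "r \<ge> 0" "a \<ge> 0" "g0 \<ge> 0" "a\<^sup>2 = r\<^sup>2 - 1" "g0\<^sup>2 = r\<^sup>2 - 1/2"
      using M2 by (simp_all add: r_def a_def g0_def)
    have ta: "t < a - s" using t(2) by (simp add: a_def s_def dl_def C_def M_def)
    have G: "norm g \<ge> g0 - t/4" using g1 gam by simp
    have D1: "D \<le> s + t/4" using h2 by (simp add: D_def s_def dl_def C_def)
    have "g \<bullet> zb \<le> t / 4 * norm zb" using g3 by (simp only: zb_def M_def)
    hence p: "g \<bullet> zb \<le> t / 4 * (r * norm z)" using nzb by simp
    show "2 * norm z * (s + t) / (a - s - t) * ((norm g)\<^sup>2 - D\<^sup>2) > 2 * (g \<bullet> zb) + 2 * (r * norm z) * D"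
      by (rule core(1)[OF args s0 t(1) ta w0 G D0 D1 p])
    show "norm g > D"
      by (rule core(2)[OF args s0 t(1) ta w0 G D0 D1 p])
  qed
  have ell0: "2 * norm z * (s + t) / (a - s - t) > 0"
  proof -
    have ta: "t < a - s" using t(2) by (simp add: a_def s_def dl_def C_def M_def)
    show ?thesis using w0 s0 t(1) ta by (intro divide_pos_pos mult_pos_pos) auto
  qed
  have "(INF \<alpha>\<in>{2 * norm z * (s + t) / (a - s - t)..}. ereal (sqrt (\<alpha>\<^sup>2 * (norm g)\<^sup>2 + (norm zb)\<^sup>2 - 2 * \<alpha> * (g \<bullet> zb)) - \<alpha> * D)) > ereal (norm zb)"
    by (rule inf_part[OF ell0 core2 D0 norm_ge_zero]) (use core1 nzb in simp)
  thus ?thesis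
    by (simp add: Let_def zb_def D_def C_def dl_def s_def a_def M_def)
qed

end
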